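(* Let $\mathrm{M}$ be the 2-space group $\ast632$ (IT number 17, $p6m$), so that $E^2/\mathrm{M}$ is a $30^\circ$–$60^\circ$ right triangle. Then $\mathrm{Sym}(\mathrm{M})=\mathrm{Aff}(\mathrm{M})=\{\mathrm{idt.}\}$, and $\Omega:\mathrm{Aff}(\mathrm{M})\to\mathrm{Out}(\mathrm{M})$ is an isomorphism.
   Context: A 2-space group is a discrete group of isometries of $E^2$ with compact quotient. Affine maps of $E^2$ are written $a+A$ ($x\mapsto a+Ax$). For a 2-space group $\mathrm{M}$, let $N_A(\mathrm{M})$ be its normalizer in the affine group of $E^2$; each $a+A\in N_A(\mathrm{M})$ induces an affinity $(a+A)_\star:\mathrm{M}x\mapsto\mathrm{M}(a+Ax)$ of the flat orbifold $E^2/\mathrm{M}$. $\mathrm{Aff}(\mathrm{M})$ is the group of all such affinities and $\mathrm{Sym}(\mathrm{M})=\mathrm{Isom}(E^2/\mathrm{M})$ its subgroup of isometries; idt. is the identity. $\Omega:\mathrm{Aff}(\mathrm{M})\to\mathrm{Out}(\mathrm{M})$ sends $(a+A)_\star$ to the outer automorphism class of $g\mapsto(a+A)g(a+A)^{-1}$ on $\mathrm{M}$. *)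

theory Defs
  imports Complex_Main "HOL-Algebra.Coset"
begin

text \<open>The Euclidean plane E^2 is modelled by the type complex (as a 2-dimensional
real inner product space). Affine maps x -> a + A x with A an invertible real-linear map.\<close>

definition affine_maps :: "(complex \<Rightarrow> complex) set" where
  "affine_maps = {f. \<exists>a L. linear L \<and> bij L \<and> f = (\<lambda>x. a + L x)}"

definition omega6 :: complex where
  "omega6 = cis (pi / 3)"

definition hex_lattice :: "complex set" where
  "hex_lattice = {of_int m + of_int n * omega6 | m n. True}"

definition p6m :: "(complex \<Rightarrow> complex) set" where
  "p6m = {(\<lambda>z. t + omega6 ^ k * z) | t k. t \<in> hex_lattice \<and> k < 6}
       \<union> {(\<lambda>z. t + omega6 ^ k * cnj z) | t k. t \<in> hex_lattice \<and> k < 6}"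

definition orb :: "(complex \<Rightarrow> complex) set \<Rightarrow> complex \<Rightarrow> complex set" where
  "orb \<Gamma> x = (\<lambda>g. g x) ` \<Gamma>"

definition orbit_space :: "(complex \<Rightarrow> complex) set \<Rightarrow> complex set set" where
  "orbit_space \<Gamma> = range (orb \<Gamma>)"

definition normalizer_aff :: "(complex \<Rightarrow> complex) set \<Rightarrow> (complex \<Rightarrow> complex) set" where
  "normalizer_aff \<Gamma> = {f \<in> affine_maps. (\<lambda>g. f \<circ> g \<circ> inv_into UNIV f) ` \<Gamma> = \<Gamma>}"

definition induced :: "(complex \<Rightarrow> complex) set \<Rightarrow> (complex \<Rightarrow> complex) \<Rightarrow> complex set \<Rightarrow> complex set" where
  "induced \<Gamma> f = (\<lambda>S\<in>orbit_space \<Gamma>. orb \<Gamma> (f (SOME x. x \<in> S)))"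

definition Aff :: "(complex \<Rightarrow> complex) set \<Rightarrow> (complex set \<Rightarrow> complex set) set" where
  "Aff \<Gamma> = induced \<Gamma> ` normalizer_aff \<Gamma>"

definition Sym :: "(complex \<Rightarrow> complex) set \<Rightarrow> (complex set \<Rightarrow> complex set) set" where
  "Sym \<Gamma> = induced \<Gamma> ` {f \<in> normalizer_aff \<Gamma>. \<forall>x y. dist (f x) (f y) = dist x y}"

definition idt :: "(complex \<Rightarrow> complex) set \<Rightarrow> complex set \<Rightarrow> complex set" where
  "idt \<Gamma> = (\<lambda>S\<in>orbit_space \<Gamma>. S)"

definition Aff_group :: "(complex \<Rightarrow> complex) set \<Rightarrow> (complex set \<Rightarrow> complex set) monoid" where
  "Aff_group \<Gamma> = \<lparr>carrier = Aff \<Gamma>,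
     mult = (\<lambda>\<phi> \<psi>. \<lambda>S\<in>orbit_space \<Gamma>. \<phi> (\<psi> S)), one = idt \<Gamma>\<rparr>"

text \<open>Aut(M), Inn(M), Out(M) = Aut(M)/Inn(M); automorphisms are represented
as extensional maps on M.\<close>

definition Aut_group :: "(complex \<Rightarrow> complex) set \<Rightarrow> ((complex \<Rightarrow> complex) \<Rightarrow> (complex \<Rightarrow> complex)) monoid" where
  "Aut_group \<Gamma> = \<lparr>carrier = {\<phi>. \<phi> \<in> extensional \<Gamma> \<and> bij_betw \<phi> \<Gamma> \<Gamma> \<and>
        (\<forall>g\<in>\<Gamma>. \<forall>h\<in>\<Gamma>. \<phi> (g \<circ> h) = \<phi> g \<circ> \<phi> h)},
     mult = (\<lambda>\<phi> \<psi>. \<lambda>g\<in>\<Gamma>. \<phi> (\<psi> g)), one = (\<lambda>g\<in>\<Gamma>. g)\<rparr>"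

definition conj_by :: "(complex \<Rightarrow> complex) \<Rightarrow> (complex \<Rightarrow> complex) set \<Rightarrow> (complex \<Rightarrow> complex) \<Rightarrow> (complex \<Rightarrow> complex)" where
  "conj_by f \<Gamma> = (\<lambda>g\<in>\<Gamma>. f \<circ> g \<circ> inv_into UNIV f)"

definition Inn :: "(complex \<Rightarrow> complex) set \<Rightarrow> ((complex \<Rightarrow> complex) \<Rightarrow> (complex \<Rightarrow> complex)) set" where
  "Inn \<Gamma> = (\<lambda>h. conj_by h \<Gamma>) ` \<Gamma>"

definition Out_group :: "(complex \<Rightarrow> complex) set \<Rightarrow> ((complex \<Rightarrow> complex) \<Rightarrow> (complex \<Rightarrow> complex)) set monoid" where
  "Out_group \<Gamma> = Aut_group \<Gamma> Mod Inn \<Gamma>"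

definition Omega :: "(complex \<Rightarrow> complex) set \<Rightarrow> (complex set \<Rightarrow> complex set) \<Rightarrow> ((complex \<Rightarrow> complex) \<Rightarrow> (complex \<Rightarrow> complex)) set" where
  "Omega \<Gamma> \<psi> = Inn \<Gamma> #>\<^bsub>Aut_group \<Gamma>\<^esub>
      conj_by (SOME f. f \<in> normalizer_aff \<Gamma> \<and> induced \<Gamma> f = \<psi>) \<Gamma>"

end

theory Submission
  imports Defs
begin

lemma om_def': "omega6 = Complex (1/2) (sqrt 3 / 2)"
  unfolding omega6_def cis.ctr by (simp add: cos_60 sin_60)
lemma om_Re[simp]: "Re omega6 = 1/2" and om_Im[simp]: "Im omega6 = sqrt 3 / 2"
  by (simp_all add: om_def')
lemma om_sq: "omega6^2 = omega6 - 1"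
  by (simp add: complex_eq_iff power2_eq_square)
lemma om_cnj: "cnj omega6 = 1 - omega6"
  by (simp add: complex_eq_iff)
lemma om_norm: "omega6 * cnj omega6 = 1"
  by (simp add: complex_eq_iff)
lemma om_ne1: "omega6 \<noteq> 1" by (simp add: complex_eq_iff)
lemma om_ne0: "omega6 \<noteq> 0" by (simp add: complex_eq_iff)
lemma om_cnj_ne: "cnj omega6 \<noteq> omega6" by (simp add: complex_eq_iff)
lemma om3: "omega6^3 = -1"
  by (simp add: power3_eq_cube om_sq[unfolded power2_eq_square] algebra_simps)
lemma om6: "omega6^6 = 1"
proof - have "omega6^6 = (omega6^3)^2" by (simp add: power_mult[symmetric])
  thus ?thesis by (simp add: om3) qed
lemma cmod_om: "cmod omega6 = 1" by (simp add: cmod_def power2_eq_square)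


abbreviation "Lam \<equiv> hex_lattice"
lemma lat_iff: "x \<in> Lam \<longleftrightarrow> (\<exists>m n. x = of_int m + of_int n * omega6)"
  unfolding hex_lattice_def by auto

lemma lat_add: "x \<in> Lam \<Longrightarrow> y \<in> Lam \<Longrightarrow> x + y \<in> Lam"
proof -
  assume "x \<in> Lam" "y \<in> Lam"
  then obtain m n m' n' where "x = of_int m + of_int n * omega6" "y = of_int m' + of_int n' * omega6"
    by (auto simp: lat_iff)
  then have "x + y = of_int (m+m') + of_int (n+n') * omega6" by (simp add: algebra_simps)
  thus ?thesis unfolding lat_iff by blast
qed
lemma lat_uminus: "x \<in> Lam \<Longrightarrow> - x \<in> Lam"
proof -
  assume "x \<in> Lam"
  then obtain m n where "x = of_int m + of_int n * omega6" by (auto simp: lat_iff)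
  then have "- x = of_int (-m) + of_int (-n) * omega6" by (simp add: algebra_simps)
  thus ?thesis unfolding lat_iff by blast
qed
lemma lat_diff: "x \<in> Lam \<Longrightarrow> y \<in> Lam \<Longrightarrow> x - y \<in> Lam"
  using lat_add[of x "-y"] lat_uminus[of y] by simp
lemma lat_mult: "x \<in> Lam \<Longrightarrow> y \<in> Lam \<Longrightarrow> x * y \<in> Lam"
proof -
  assume "x \<in> Lam" "y \<in> Lam"
  then obtain m n m' n' where "x = of_int m + of_int n * omega6" "y = of_int m' + of_int n' * omega6"
    by (auto simp: lat_iff)
  then have "x * y = of_int (m*m') + of_int (m*n'+n*m') * omega6 + of_int (n*n') * omega6^2"
    by (simp add: algebra_simps power2_eq_square)
  also have "\<dots> = of_int (m*m' - n*n') + of_int (m*n'+n*m'+n*n') * omega6"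
    unfolding om_sq by (simp add: algebra_simps)
  finally have "x * y = of_int (m*m' - n*n') + of_int (m*n'+n*m'+n*n') * omega6" .
  thus ?thesis unfolding lat_iff by blast
qed
lemma lat_cnj: "x \<in> Lam \<Longrightarrow> cnj x \<in> Lam"
proof -
  assume "x \<in> Lam"
  then obtain m n where "x = of_int m + of_int n * omega6" by (auto simp: lat_iff)
  then have "cnj x = of_int (m+n) + of_int (-n) * omega6" by (simp add: om_cnj algebra_simps)
  thus ?thesis unfolding lat_iff by blast
qed
lemma lat_int: "of_int k \<in> Lam"
  unfolding lat_iff by (rule exI[of _ k], rule exI[of _ 0]) simp
lemma lat_0: "0 \<in> Lam" using lat_int[of 0] by simp
lemma lat_1: "1 \<in> Lam" using lat_int[of 1] by simp
lemma lat_om: "omega6 \<in> Lam"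
  unfolding lat_iff by (rule exI[of _ 0], rule exI[of _ 1]) simp
lemma lat_pow: "omega6 ^ k \<in> Lam"
  by (induction k) (auto intro: lat_mult lat_1 lat_om)

lemma norm_lat: "(cmod (of_int m + of_int n * omega6))^2 = of_int (m^2 + m*n + n^2)"
proof -
  have "(cmod (of_int m + of_int n * omega6))^2 = (Re (of_int m + of_int n * omega6))^2 + (Im (of_int m + of_int n * omega6))^2"
    by (rule cmod_power2)
  also have "\<dots> = (m + n/2)^2 + (n * sqrt 3 / 2)^2" by simp
  also have "\<dots> = m^2 + m*n + n^2" by (simp add: power2_eq_square algebra_simps)
  finally show ?thesis by simp
qed


lemma quad_id: "4*(m^2 + m*n + n^2) = (2*m+n)^2 + 3*n^2" for m n :: int
  by (simp add: power2_eq_square algebra_simps)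

lemma lat_normsq: "x \<in> Lam \<Longrightarrow> \<exists>k::int. (cmod x)^2 = of_int k \<and> (x \<noteq> 0 \<longrightarrow> k \<ge> 1)"
proof -
  assume "x \<in> Lam"
  then obtain m n where x: "x = of_int m + of_int n * omega6" by (auto simp: lat_iff)
  have "m^2 + m*n + n^2 \<ge> 0" using quad_id[of m n] by (smt (verit) zero_le_power2)
  moreover have "x \<noteq> 0 \<Longrightarrow> m^2 + m*n + n^2 \<noteq> 0"
  proof
    assume "x \<noteq> 0" "m^2 + m*n + n^2 = 0"
    hence "(cmod x)^2 = 0" using norm_lat[of m n] x by simp
    thus False using \<open>x \<noteq> 0\<close> by simp
  qed
  ultimately show ?thesis using norm_lat[of m n] x by (intro exI[of _ "m^2 + m*n + n^2"]) auto
qed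

lemma om_pows: "omega6^2 = omega6 - 1" "omega6^3 = -1" "omega6^4 = - omega6" "omega6^5 = 1 - omega6"
proof -
  show a: "omega6^2 = omega6 - 1" "omega6^3 = -1" by (rule om_sq, rule om3)
  have "omega6^4 = omega6^3 * omega6" by (simp add: power_Suc2[symmetric])
  thus "omega6^4 = - omega6" using a by simp
  have "omega6^5 = omega6^3 * omega6^2" by (simp add: power_add[symmetric])
  thus "omega6^5 = 1 - omega6" using a by (simp add: algebra_simps)
qed

lemma unit_cases:
  assumes "x \<in> Lam" "cmod x = 1"
  shows "\<exists>k<6. x = omega6 ^ k"
proof -
  obtain m n where x: "x = of_int m + of_int n * omega6" using assms by (auto simp: lat_iff)
  have "real_of_int (m^2 + m*n + n^2) = 1" using norm_lat[of m n] assms x by simp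
  hence e: "m^2 + m*n + n^2 = 1" by linarith
  have "(2*m+n)^2 + 3*n^2 = 4" using e quad_id[of m n] by simp
  hence "n^2 \<le> 1" by (smt (verit) zero_le_power2)
  hence "\<bar>n\<bar> \<le> 1" using abs_le_square_iff[of n 1] by simp
  hence n: "n = 0 \<or> n = 1 \<or> n = -1" by auto
  note o = om_pows
  from n show ?thesis
  proof (elim disjE)
    assume n0: "n = 0" hence "m^2 = 1" using e by simp
    hence "m = 1 \<or> m = -1" by (simp add: power2_eq_1_iff)
    thus ?thesis
    proof
      assume "m = 1" thus ?thesis using n0 x by (intro exI[of _ 0]) simp
    next
      assume "m = -1" thus ?thesis using n0 x o by (intro exI[of _ 3]) simp
    qed
  next
    assume n1: "n = 1" hence "m*(m+1) = 0" using e by (simp add: power2_eq_square algebra_simps)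
    hence "m = 0 \<or> m = -1" by auto
    thus ?thesis
    proof
      assume "m = 0" thus ?thesis using n1 x by (intro exI[of _ 1]) simp
    next
      assume "m = -1" thus ?thesis using n1 x o by (intro exI[of _ 2]) simp
    qed
  next
    assume n1: "n = -1" hence "m*(m-1) = 0" using e by (simp add: power2_eq_square algebra_simps)
    hence "m = 0 \<or> m = 1" by auto
    thus ?thesis
    proof
      assume "m = 0" thus ?thesis using n1 x o by (intro exI[of _ 4]) simp
    next
      assume "m = 1" thus ?thesis using n1 x o by (intro exI[of _ 5]) simp
    qed
  qed
qed


definition cj :: "bool \<Rightarrow> complex \<Rightarrow> complex" where "cj e z = (if e then cnj z else z)"
definition gel :: "complex \<Rightarrow> complex \<Rightarrow> bool \<Rightarrow> complex \<Rightarrow> complex" where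
  "gel t a e = (\<lambda>z. t + a * cj e z)"
definition Uu :: "complex set" where "Uu = {a. a \<in> Lam \<and> cmod a = 1}"
definition Gam :: "(complex \<Rightarrow> complex) set" where
  "Gam = {gel t a e | t a e. t \<in> Lam \<and> a \<in> Uu}"

lemma cj_simps[simp]: "cj e (x + y) = cj e x + cj e y" "cj e (x * y) = cj e x * cj e y"
  "cj e (x - y) = cj e x - cj e y" "cj e (- x) = - cj e x"
  "cj e 0 = 0" "cj e 1 = 1" "cj False x = x" "cj True x = cnj x"
  "cj e (cj e' x) = cj (e \<noteq> e') x" "cmod (cj e x) = cmod x"
  by (auto simp: cj_def)
lemma cj_lat: "x \<in> Lam \<Longrightarrow> cj e x \<in> Lam" by (auto simp: cj_def lat_cnj)
lemma cj_scaleR: "cj e (r *\<^sub>R x) = r *\<^sub>R cj e x" by (auto simp: cj_def)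
lemma cj_ii: "cj e \<i> = (if e then - \<i> else \<i>)" by (auto simp: cj_def)

lemma Uu_mult: "a \<in> Uu \<Longrightarrow> b \<in> Uu \<Longrightarrow> a * b \<in> Uu" by (auto simp: Uu_def lat_mult norm_mult)
lemma Uu_cj: "a \<in> Uu \<Longrightarrow> cj e a \<in> Uu" by (auto simp: Uu_def cj_lat)
lemma Uu_cnj: "a \<in> Uu \<Longrightarrow> cnj a \<in> Uu" using Uu_cj[of a True] by simp
lemma Uu_1: "1 \<in> Uu" by (auto simp: Uu_def lat_1)
lemma Uu_pow: "omega6 ^ k \<in> Uu" by (auto simp: Uu_def lat_pow norm_power cmod_om)
lemma Uu_ne0: "a \<in> Uu \<Longrightarrow> a \<noteq> 0" by (auto simp: Uu_def)
lemma Uu_inv: "a \<in> Uu \<Longrightarrow> a * cnj a = 1"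
proof -
  assume "a \<in> Uu" hence "cmod a = 1" by (simp add: Uu_def)
  hence "(Re a)^2 + (Im a)^2 = 1" using cmod_power2[of a] by simp
  thus ?thesis by (simp add: complex_mult_cnj)
qed
lemma Uu_inv': "a \<in> Uu \<Longrightarrow> cnj a * a = 1" using Uu_inv by (simp add: mult.commute)

lemma gel_comp: "gel t a e \<circ> gel t' a' e' = gel (t + a * cj e t') (a * cj e a') (e \<noteq> e')"
  by (auto simp: gel_def fun_eq_iff algebra_simps)
lemma gel_app: "gel t a e z = t + a * cj e z" by (simp add: gel_def)
lemma gel_shift: "gel t a e (x + y) = gel t a e x + a * cj e y"
  by (simp add: gel_def algebra_simps)

lemma gel_eqD:
  assumes "gel t a e = gel t' a' e'" "a \<noteq> 0"
  shows "t = t'" "a = a'" "e = e'"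
proof -
  have h: "\<And>z. t + a * cj e z = t' + a' * cj e' z" using assms(1) by (simp add: gel_def fun_eq_iff)
  show t: "t = t'" using h[of 0] by simp
  show a: "a = a'" using h[of 1] t by simp
  show "e = e'"
  proof (rule ccontr)
    assume "e \<noteq> e'"
    hence "a * \<i> = - (a * \<i>)" using h[of "\<i>"] t a by (cases e; cases e'; auto simp: cj_ii)
    thus False using assms(2) by (simp add: complex_eq_iff)
  qed
qed

lemma id_gel: "id = gel 0 1 False" by (simp add: gel_def fun_eq_iff)
lemma id_Gam: "id \<in> Gam" unfolding Gam_def id_gel using lat_0 Uu_1 by blast

lemma GamE: "g \<in> Gam \<Longrightarrow> (\<And>t a e. g = gel t a e \<Longrightarrow> t \<in> Lam \<Longrightarrow> a \<in> Uu \<Longrightarrow> P) \<Longrightarrow> P"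
  unfolding Gam_def by blast
lemma GamI: "t \<in> Lam \<Longrightarrow> a \<in> Uu \<Longrightarrow> gel t a e \<in> Gam"
  unfolding Gam_def by blast

lemma Gam_comp: "g \<in> Gam \<Longrightarrow> h \<in> Gam \<Longrightarrow> g \<circ> h \<in> Gam"
proof -
  assume "g \<in> Gam" "h \<in> Gam"
  then obtain t a e t' a' e' where g: "g = gel t a e" "t \<in> Lam" "a \<in> Uu" and h: "h = gel t' a' e'" "t' \<in> Lam" "a' \<in> Uu"
    by (metis GamE)
  have "a \<in> Lam" using \<open>a \<in> Uu\<close> by (simp add: Uu_def)
  thus ?thesis unfolding g(1) h(1) gel_comp using g h by (intro GamI lat_add lat_mult cj_lat Uu_mult Uu_cj) auto
qed

lemma Gam_inv: "g \<in> Gam \<Longrightarrow> \<exists>g'\<in>Gam. g \<circ> g' = id \<and> g' \<circ> g = id"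
proof (elim GamE)
  fix t a e assume g: "g = gel t a e" and t: "t \<in> Lam" and a: "a \<in> Uu"
  define b where "b = cj e (cnj a)"
  have b: "b \<in> Uu" using a by (simp add: b_def Uu_cj Uu_cnj)
  have ab: "a * cj e b = 1" "b * cj e a = 1" using Uu_inv[OF a] Uu_inv'[OF a]
    by (cases e; simp add: b_def)+
  have aL: "a \<in> Lam" "b \<in> Lam" using a b by (auto simp: Uu_def)
  have "gel (- (b * cj e t)) b e \<in> Gam"
    by (intro GamI b lat_uminus lat_mult aL cj_lat t)
  moreover have "g \<circ> gel (- (b * cj e t)) b e = id"
    unfolding g gel_comp id_gel using ab
    by (simp add: mult.assoc[symmetric])
  moreover have "gel (- (b * cj e t)) b e \<circ> g = id"
    unfolding g gel_comp id_gel using ab by simp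
  ultimately show ?thesis by blast
qed

lemma Gam_bij: "g \<in> Gam \<Longrightarrow> bij g"
proof -
  assume "g \<in> Gam"
  then obtain g' where "g \<circ> g' = id" "g' \<circ> g = id" using Gam_inv by blast
  thus "bij g" using o_bij by blast
qed

lemma Gam_inv_into: "g \<in> Gam \<Longrightarrow> g' \<in> Gam \<Longrightarrow> g' \<circ> g = id \<Longrightarrow> inv_into UNIV g = g'"
proof -
  assume "g \<in> Gam" "g' \<in> Gam" "g' \<circ> g = id"
  then obtain g'' where g'': "g \<circ> g'' = id" "g'' \<circ> g = id" using Gam_inv by blast
  have "g' = g''" by (metis g''(1) \<open>g' \<circ> g = id\<close> comp_assoc comp_id id_comp)
  thus ?thesis using g'' by (metis inv_unique_comp)
qed

lemma p6m_eq: "p6m = Gam"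
proof
  show "p6m \<subseteq> Gam"
  proof
    fix g assume "g \<in> p6m"
    then obtain t k where t: "t \<in> Lam" and "g = gel t (omega6^k) False \<or> g = gel t (omega6^k) True"
      unfolding p6m_def by (auto simp: gel_def)
    thus "g \<in> Gam" using GamI[OF t Uu_pow] by auto
  qed
next
  show "Gam \<subseteq> p6m"
  proof
    fix g assume "g \<in> Gam"
    then obtain t a e where g: "g = gel t a e" "t \<in> Lam" "a \<in> Uu" by (elim GamE)
    then obtain k where k: "k < 6" "a = omega6 ^ k" using unit_cases by (auto simp: Uu_def)
    show "g \<in> p6m"
    proof (cases e)
      case True thus ?thesis unfolding p6m_def using g k by (auto simp: gel_def)
    next
      case False thus ?thesis unfolding p6m_def using g k by (auto simp: gel_def)
    qed
  qed
qed


definition Tr :: "complex \<Rightarrow> complex \<Rightarrow> complex" where "Tr t = gel t 1 False"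
lemma Tr_app: "Tr t z = t + z" by (simp add: Tr_def gel_def)
lemma Tr_comp: "Tr t \<circ> Tr s = Tr (t + s)" by (simp add: Tr_def gel_comp)
lemma Tr_Gam: "t \<in> Lam \<Longrightarrow> Tr t \<in> Gam" unfolding Tr_def by (intro GamI Uu_1)
lemma Tr_0: "Tr 0 = id" by (simp add: Tr_def id_gel)
lemma Tr_inj: "Tr t = Tr s \<Longrightarrow> t = s" by (metis Tr_app add.right_neutral)

lemma Gam_lin: "g \<in> Gam \<Longrightarrow> g (x + y) = g x + (g y - g 0)"
  by (elim GamE) (simp add: gel_shift gel_app distrib_left)

definition commg :: "(complex \<Rightarrow> complex) \<Rightarrow> bool" where
  "commg g = (\<forall>h\<in>Gam. \<forall>h'\<in>Gam. h \<circ> h' = id \<longrightarrow> g \<circ> (h \<circ> g \<circ> h') = (h \<circ> g \<circ> h') \<circ> g)"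

lemma conj_Tr: "h \<in> Gam \<Longrightarrow> h' \<in> Gam \<Longrightarrow> h \<circ> h' = id \<Longrightarrow> h \<circ> Tr t \<circ> h' = Tr (h t - h 0)"
proof -
  assume h: "h \<in> Gam" "h' \<in> Gam" "h \<circ> h' = id"
  have "(h \<circ> Tr t \<circ> h') z = Tr (h t - h 0) z" for z
  proof -
    have "(h \<circ> Tr t \<circ> h') z = h (h' z + t)" by (simp add: Tr_app add.commute)
    also have "\<dots> = h (h' z) + (h t - h 0)" using Gam_lin[OF h(1)] by simp
    also have "\<dots> = z + (h t - h 0)" using h(3) by (metis comp_apply id_apply)
    finally show ?thesis by (simp add: Tr_app add.commute)
  qed
  thus ?thesis by auto
qed

lemma commg_Tr: "commg (Tr t)"
  unfolding commg_def by (auto simp: conj_Tr Tr_comp add.commute)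

lemma commg_D:
  assumes g: "g \<in> Gam" and c: "commg g"
  shows "\<exists>t\<in>Lam. g = Tr t"
proof -
  obtain t a e where g': "g = gel t a e" "t \<in> Lam" "a \<in> Uu" using g by (elim GamE)
  have key: "(g \<circ> (Tr s \<circ> g \<circ> Tr (-s))) 0 = ((Tr s \<circ> g \<circ> Tr (-s)) \<circ> g) 0" if "s \<in> Lam" for s
    using c that unfolding commg_def
    by (metis Tr_Gam Tr_comp Tr_0 add.right_inverse lat_uminus)
  have k1: "t + a * cj e (1 + (t + a * cj e (-1))) = 1 + (t + a * cj e (t + - 1))"
    using key[OF lat_1] unfolding g'(1) by (simp add: Tr_app gel_app)
  have k2: "t + a * cj e (omega6 + (t + a * cj e (-omega6))) = omega6 + (t + a * cj e (t + - omega6))"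
    using key[OF lat_om] unfolding g'(1) by (simp add: Tr_app gel_app)
  have inv: "a * cnj a = 1" using Uu_inv[OF g'(3)] .
  have "a = 1 \<and> e = False"
  proof (cases e)
    case False
    hence "t + a * (1 + (t - a)) = 1 + (t + a * (t - 1))" using k1 by simp
    hence "(a - 1)^2 = 0" by algebra
    thus ?thesis using False by simp
  next
    case True
    hence "t + a * (1 + cnj t - cnj a) = 1 + (t + a * (cnj t - 1))" using k1 by (simp add: algebra_simps)
    hence a1: "a = 1" using inv by algebra
    have "t + a * (cnj omega6 + cnj t - cnj a * omega6) = omega6 + (t + a * (cnj t - cnj omega6))"
      using k2 True by (simp add: algebra_simps)
    hence "t + (cnj omega6 + cnj t - omega6) = omega6 + (t + (cnj t - cnj omega6))" using a1 by simp
    hence "cnj omega6 = omega6" by algebra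
    thus ?thesis using om_cnj_ne by simp
  qed
  thus ?thesis using g' by (auto simp: Tr_def)
qed

lemma commg_iff: "g \<in> Gam \<Longrightarrow> commg g \<longleftrightarrow> (\<exists>t\<in>Lam. g = Tr t)"
  using commg_D commg_Tr by blast


locale autom =
  fixes phi :: "(complex \<Rightarrow> complex) \<Rightarrow> (complex \<Rightarrow> complex)"
  assumes bij: "bij_betw phi Gam Gam"
    and hom: "\<And>g h. g \<in> Gam \<Longrightarrow> h \<in> Gam \<Longrightarrow> phi (g \<circ> h) = phi g \<circ> phi h"
begin

lemma inG: "g \<in> Gam \<Longrightarrow> phi g \<in> Gam" using bij by (auto simp: bij_betw_def)
lemma injG: "g \<in> Gam \<Longrightarrow> h \<in> Gam \<Longrightarrow> phi g = phi h \<Longrightarrow> g = h"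
  using bij by (auto simp: bij_betw_def inj_on_def)
lemma surjG: "H \<in> Gam \<Longrightarrow> \<exists>h\<in>Gam. phi h = H"
  using bij unfolding bij_betw_def by (metis imageE)

lemma phi_id: "phi id = id"
proof -
  have X: "phi id \<in> Gam" using inG id_Gam by blast
  have "phi id = phi id \<circ> phi id" using hom[OF id_Gam id_Gam] by simp
  hence "phi id (phi id z) = phi id z" for z by (metis comp_apply)
  moreover have "inj (phi id)" using Gam_bij[OF X] bij_is_inj by blast
  ultimately have "phi id z = z" for z by (meson injD)
  thus ?thesis by auto
qed

lemma phi_inv: "h \<in> Gam \<Longrightarrow> h' \<in> Gam \<Longrightarrow> h \<circ> h' = id \<Longrightarrow> phi h \<circ> phi h' = id"
  using hom phi_id by metis

lemma phi_inv_rev: "h \<in> Gam \<Longrightarrow> h' \<in> Gam \<Longrightarrow> phi h \<circ> phi h' = id \<Longrightarrow> h \<circ> h' = id"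
  using hom phi_id injG Gam_comp id_Gam by metis

lemma commg_phi: assumes g: "g \<in> Gam" and c: "commg g" shows "commg (phi g)"
  unfolding commg_def
proof (intro ballI impI)
  fix H H' assume H: "H \<in> Gam" "H' \<in> Gam" "H \<circ> H' = id"
  obtain h h' where h: "h \<in> Gam" "h' \<in> Gam" "phi h = H" "phi h' = H'" using H surjG by metis
  have hh: "h \<circ> h' = id" using phi_inv_rev h H by blast
  have e: "g \<circ> (h \<circ> g \<circ> h') = (h \<circ> g \<circ> h') \<circ> g" using c h hh unfolding commg_def by blast
  have m: "h \<circ> g \<circ> h' \<in> Gam" using h g Gam_comp by blast
  have p: "phi (h \<circ> g \<circ> h') = H \<circ> phi g \<circ> H'" using h g hom Gam_comp by metis
  have "phi (g \<circ> (h \<circ> g \<circ> h')) = phi ((h \<circ> g \<circ> h') \<circ> g)" using e by simp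
  thus "phi g \<circ> (H \<circ> phi g \<circ> H') = (H \<circ> phi g \<circ> H') \<circ> phi g"
    using hom[OF g m] hom[OF m g] p by simp
qed

lemma commg_phi_rev: assumes g: "g \<in> Gam" and c: "commg (phi g)" shows "commg g"
  unfolding commg_def
proof (intro ballI impI)
  fix h h' assume h: "h \<in> Gam" "h' \<in> Gam" "h \<circ> h' = id"
  have hh: "phi h \<circ> phi h' = id" using phi_inv h by blast
  have e: "phi g \<circ> (phi h \<circ> phi g \<circ> phi h') = (phi h \<circ> phi g \<circ> phi h') \<circ> phi g"
    using c h hh inG unfolding commg_def by blast
  have m: "h \<circ> g \<circ> h' \<in> Gam" using h g Gam_comp by blast
  have p: "phi (h \<circ> g \<circ> h') = phi h \<circ> phi g \<circ> phi h'" using h g hom Gam_comp by metis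
  have "phi (g \<circ> (h \<circ> g \<circ> h')) = phi ((h \<circ> g \<circ> h') \<circ> g)"
    using hom[OF g m] hom[OF m g] p e by simp
  thus "g \<circ> (h \<circ> g \<circ> h') = (h \<circ> g \<circ> h') \<circ> g" using injG Gam_comp g m by blast
qed

definition A :: "complex \<Rightarrow> complex" where "A t = phi (Tr t) 0"

lemma phi_Tr: "t \<in> Lam \<Longrightarrow> phi (Tr t) = Tr (A t) \<and> A t \<in> Lam"
proof -
  assume t: "t \<in> Lam"
  have "commg (phi (Tr t))" using commg_phi[OF Tr_Gam[OF t] commg_Tr] .
  then obtain u where "u \<in> Lam" "phi (Tr t) = Tr u" using commg_D inG Tr_Gam t by blast
  thus ?thesis by (simp add: A_def Tr_app)
qed

lemma A_lat: "t \<in> Lam \<Longrightarrow> A t \<in> Lam" using phi_Tr by blast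

lemma A_add: "t \<in> Lam \<Longrightarrow> s \<in> Lam \<Longrightarrow> A (t + s) = A t + A s"
proof -
  assume ts: "t \<in> Lam" "s \<in> Lam"
  have "Tr (A (t + s)) = Tr (A t) \<circ> Tr (A s)"
    using phi_Tr hom[OF Tr_Gam Tr_Gam, OF ts] ts lat_add Tr_comp by metis
  thus ?thesis by (simp add: Tr_comp Tr_inj)
qed

lemma A_0: "A 0 = 0" using A_add[OF lat_0 lat_0] by simp
lemma A_uminus: "t \<in> Lam \<Longrightarrow> A (- t) = - A t"
  using A_add[of t "-t"] lat_uminus A_0 by (simp add: eq_neg_iff_add_eq_0 add.commute)

lemma A_nz: "t \<in> Lam \<Longrightarrow> t \<noteq> 0 \<Longrightarrow> A t \<noteq> 0"
proof
  assume t: "t \<in> Lam" "t \<noteq> 0" "A t = 0"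
  hence "phi (Tr t) = phi id" using phi_Tr phi_id Tr_0 by metis
  hence "Tr t = Tr 0" using injG Tr_Gam t id_Gam Tr_0 by metis
  thus False using t Tr_inj by blast
qed

lemma A_surj1: "\<exists>m\<in>Lam. A m = 1"
proof -
  obtain g where g: "g \<in> Gam" "phi g = Tr 1" using surjG Tr_Gam lat_1 by metis
  hence "commg g" using commg_phi_rev commg_Tr by metis
  then obtain m where "m \<in> Lam" "g = Tr m" using commg_D g by blast
  thus ?thesis using phi_Tr g by (metis Tr_inj)
qed

lemma A_nat: "t \<in> Lam \<Longrightarrow> A (of_nat n * t) = of_nat n * A t"
proof (induction n)
  case 0 thus ?case by (simp add: A_0)
next
  case (Suc n)
  have "of_nat (Suc n) * t = of_nat n * t + t" by (simp add: algebra_simps)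
  moreover have "of_nat n * t \<in> Lam" using lat_mult[OF lat_int[of "int n"] Suc.prems] by simp
  ultimately show ?case using Suc A_add by (simp add: algebra_simps)
qed

lemma A_int: "t \<in> Lam \<Longrightarrow> A (of_int k * t) = of_int k * A t"
proof (cases "k \<ge> 0")
  case True
  assume t: "t \<in> Lam"
  obtain n where "k = int n" using True nonneg_eq_int by blast
  thus ?thesis using A_nat[OF t] by simp
next
  case False
  assume t: "t \<in> Lam"
  obtain n where n: "k = - int n" using False by (metis nonneg_eq_int neg_0_le_iff_le le_cases minus_minus)
  have "of_nat n * t \<in> Lam" using lat_mult[OF lat_int[of "int n"] t] by simp
  thus ?thesis using A_nat[OF t] A_uminus n by simp
qed

end

definition Rot :: "complex \<Rightarrow> complex" where "Rot = gel 0 omega6 False"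
definition Ref :: "complex \<Rightarrow> complex" where "Ref = gel 0 1 True"
lemma Rot_Gam: "Rot \<in> Gam" unfolding Rot_def using GamI[OF lat_0 Uu_pow[of 1]] by simp
lemma Ref_Gam: "Ref \<in> Gam" unfolding Ref_def using GamI[OF lat_0 Uu_1] by simp
lemma Rot_Tr: "Rot \<circ> Tr t = Tr (omega6 * t) \<circ> Rot" by (simp add: Rot_def Tr_def gel_comp)
lemma Ref_Tr: "Ref \<circ> Tr t = Tr (cnj t) \<circ> Ref" by (simp add: Ref_def Tr_def gel_comp)

context autom begin

lemma A_om: "\<exists>b e. b \<in> Uu \<and> (\<forall>t\<in>Lam. A (omega6 * t) = b * cj e (A t))"
proof -
  obtain p b e where pb: "phi Rot = gel p b e" "b \<in> Uu" using inG[OF Rot_Gam] by (elim GamE)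
  have "A (omega6 * t) = b * cj e (A t)" if t: "t \<in> Lam" for t
  proof -
    have ot: "omega6 * t \<in> Lam" using lat_mult[OF lat_om t] .
    have "phi (Rot \<circ> Tr t) = phi (Tr (omega6 * t) \<circ> Rot)" by (simp add: Rot_Tr)
    hence "phi Rot \<circ> Tr (A t) = Tr (A (omega6 * t)) \<circ> phi Rot"
      using hom Rot_Gam Tr_Gam t ot phi_Tr by metis
    hence "(phi Rot \<circ> Tr (A t)) 0 = (Tr (A (omega6 * t)) \<circ> phi Rot) 0" by simp
    thus ?thesis unfolding pb by (simp add: Tr_app gel_app)
  qed
  thus ?thesis using pb by blast
qed

lemma A_form: "\<exists>\<alpha> e0. \<alpha> \<in> Uu \<and> (\<forall>t\<in>Lam. A t = \<alpha> * cj e0 t)"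
proof -
  obtain b e where b: "b \<in> Uu" and Ab: "\<And>t. t \<in> Lam \<Longrightarrow> A (omega6 * t) = b * cj e (A t)"
    using A_om by blast
  define \<alpha> where "\<alpha> = A 1"
  have anz: "\<alpha> \<noteq> 0" unfolding \<alpha>_def using A_nz[OF lat_1] by simp
  have aL: "\<alpha> \<in> Lam" unfolding \<alpha>_def using A_lat[OF lat_1] .
  have Aom: "A omega6 = b * cj e \<alpha>" using Ab[OF lat_1] by (simp add: \<alpha>_def)
  have "A (omega6 * omega6) = b * cj e (A omega6)" using Ab[OF lat_om] .
  moreover have "omega6 * omega6 = omega6 + (- 1)" using om_sq by (simp add: power2_eq_square)
  ultimately have Aoo: "A omega6 - \<alpha> = b * cj e (A omega6)"
    using A_add[OF lat_om lat_uminus[OF lat_1]] A_uminus[OF lat_1] by (simp add: \<alpha>_def)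
  have bb: "cnj b * b = 1" using Uu_inv'[OF b] .
  have eF: "e = False"
  proof (rule ccontr)
    assume "e \<noteq> False" hence eT: "e = True" by simp
    have "b * cnj (b * cnj \<alpha>) = (cnj b * b) * \<alpha>" by (simp add: algebra_simps)
    hence "b * cj e (A omega6) = \<alpha>" using bb Aom eT by simp
    hence "A omega6 = 2 * \<alpha>" using Aoo by simp
    hence "b * cnj \<alpha> = 2 * \<alpha>" using Aom eT by simp
    hence "cmod (b * cnj \<alpha>) = cmod (2 * \<alpha>)" by simp
    hence "cmod \<alpha> = 2 * cmod \<alpha>" using b by (simp add: norm_mult Uu_def)
    thus False using anz by simp
  qed
  have "b * (b * \<alpha>) = b * \<alpha> - \<alpha>" using Aoo Aom eF by simp
  hence "\<alpha> * ((b - omega6) * (b - cnj omega6)) = 0"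
    using om_cnj om_norm by algebra
  hence bo: "b = omega6 \<or> b = cnj omega6" using anz by simp
  have Ax: "A x = \<alpha> * (of_int m + of_int n * b)" if x: "x = of_int m + of_int n * omega6" for x m n
  proof -
    have "A x = A (of_int m * 1) + A (of_int n * omega6)"
      using x A_add lat_mult lat_int lat_1 lat_om by simp
    also have "\<dots> = of_int m * \<alpha> + of_int n * (b * \<alpha>)"
      using A_int[OF lat_1] A_int[OF lat_om] Aom eF by (simp add: \<alpha>_def)
    finally show ?thesis by (simp add: algebra_simps)
  qed
  obtain e0 where e0: "\<forall>t\<in>Lam. A t = \<alpha> * cj e0 t"
  proof (cases "b = omega6")
    case True
    show ?thesis by (rule that[of False]) (auto simp: lat_iff Ax True)
  next
    case False
    hence bc: "b = cnj omega6" using bo by simp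
    show ?thesis by (rule that[of True]) (auto simp: lat_iff Ax bc)
  qed
  obtain m where m: "m \<in> Lam" "A m = 1" using A_surj1 by blast
  have am: "\<alpha> * cj e0 m = 1" using e0 m by simp
  obtain k1 where k1: "(cmod \<alpha>)^2 = of_int k1" "k1 \<ge> 1" using lat_normsq[OF aL] anz by blast
  have cm: "cj e0 m \<noteq> 0" using am by auto
  obtain k2 where k2: "(cmod (cj e0 m))^2 = of_int k2" "k2 \<ge> 1" using lat_normsq[OF cj_lat[OF m(1)]] cm by blast
  have "(cmod \<alpha>)^2 * (cmod (cj e0 m))^2 = 1" using am
    by (metis norm_mult norm_one power_mult_distrib one_power2)
  hence "of_int (k1 * k2) = (1::real)" using k1 k2 by simp
  hence "k1 * k2 = 1" by linarith
  moreover have "k1 * 1 \<le> k1 * k2" using k1(2) k2(2) by (intro mult_left_mono) auto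
  ultimately have "k1 = 1" using k1(2) by linarith
  hence "cmod \<alpha> = 1" using k1 norm_ge_zero[of \<alpha>] by (auto simp: power2_eq_1_iff)
  hence "\<alpha> \<in> Uu" using aL by (simp add: Uu_def)
  thus ?thesis using e0 by blast
qed

end

lemma Rot_app: "Rot z = omega6 * z" by (simp add: Rot_def gel_app)
lemma Ref_app: "Ref z = cnj z" by (simp add: Ref_def gel_app)

context autom begin

lemma inner: "\<exists>K\<in>Gam. \<forall>g\<in>Gam. phi g = K \<circ> g \<circ> inv_into UNIV K"
proof -
  obtain \<alpha> e0 where a: "\<alpha> \<in> Uu" and Af: "\<And>t. t \<in> Lam \<Longrightarrow> A t = \<alpha> * cj e0 t"
    using A_form by blast
  define h0 where "h0 = gel 0 \<alpha> e0"
  have h0G: "h0 \<in> Gam" unfolding h0_def by (rule GamI[OF lat_0 a])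
  obtain h0' where h0': "h0' \<in> Gam" "h0 \<circ> h0' = id" "h0' \<circ> h0 = id" using Gam_inv[OF h0G] by blast
  have h0a: "h0 (h0' x) = x" "h0' (h0 x) = x" for x using h0' by (metis comp_apply id_apply)+
  have h00: "h0 0 = 0" by (simp add: h0_def gel_app)
  have h00': "h0' 0 = 0" using h0a(2)[of 0] h00 by simp
  define psi where "psi g = h0' \<circ> phi g \<circ> h0" for g
  have psiG: "g \<in> Gam \<Longrightarrow> psi g \<in> Gam" for g unfolding psi_def using Gam_comp inG h0G h0'(1) by blast
  have psi_hom: "g \<in> Gam \<Longrightarrow> k \<in> Gam \<Longrightarrow> psi (g \<circ> k) = psi g \<circ> psi k" for g k
    unfolding psi_def using hom h0a by (simp add: fun_eq_iff)
  have psi_id: "psi id = id" unfolding psi_def phi_id using h0' by simp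
  have psi_Tr: "t \<in> Lam \<Longrightarrow> psi (Tr t) = Tr t" for t
  proof -
    assume t: "t \<in> Lam"
    have "phi (Tr t) = Tr (h0 t)" using phi_Tr[OF t] Af[OF t] by (simp add: h0_def gel_app)
    moreover have "h0' (h0 t + h0 z) = t + z" for z
      using Gam_lin[OF h0'(1), of "h0 t" "h0 z"] h0a h00' by simp
    ultimately show ?thesis unfolding psi_def by (simp add: fun_eq_iff Tr_app)
  qed
  have psi_comm: "psi X \<circ> Tr t = Tr u \<circ> psi X"
    if "X \<in> Gam" "t \<in> Lam" "u \<in> Lam" "X \<circ> Tr t = Tr u \<circ> X" for X t u
    using that psi_hom[of X "Tr t"] psi_hom[of "Tr u" X] psi_Tr Tr_Gam by metis
  obtain p b e where pR: "psi Rot = gel p b e" "p \<in> Lam" "b \<in> Uu" using psiG[OF Rot_Gam] by (elim GamE)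
  have pR0: "p + b * cj e t = omega6 * t + p" if t: "t \<in> Lam" for t
  proof -
    have "psi Rot \<circ> Tr t = Tr (omega6 * t) \<circ> psi Rot"
      using psi_comm[OF Rot_Gam t lat_mult[OF lat_om t]] Rot_Tr by blast
    hence "(psi Rot \<circ> Tr t) 0 = (Tr (omega6 * t) \<circ> psi Rot) 0" by simp
    thus ?thesis unfolding pR by (simp add: Tr_app gel_app)
  qed
  have bw: "b = omega6" using pR0[OF lat_1] by simp
  have eF: "e = False"
  proof (rule ccontr)
    assume "e \<noteq> False"
    hence "omega6 * cnj omega6 = omega6 * omega6" using pR0[OF lat_om] bw by simp
    thus False using om_ne0 om_cnj_ne by simp
  qed
  obtain q c f where qS: "psi Ref = gel q c f" "q \<in> Lam" "c \<in> Uu" using psiG[OF Ref_Gam] by (elim GamE)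
  have qS0: "q + c * cj f t = cnj t + q" if t: "t \<in> Lam" for t
  proof -
    have "psi Ref \<circ> Tr t = Tr (cnj t) \<circ> psi Ref"
      using psi_comm[OF Ref_Gam t lat_cnj[OF t]] Ref_Tr by blast
    hence "(psi Ref \<circ> Tr t) 0 = (Tr (cnj t) \<circ> psi Ref) 0" by simp
    thus ?thesis unfolding qS by (simp add: Tr_app gel_app)
  qed
  have c1: "c = 1" using qS0[OF lat_1] by simp
  have fT: "f = True"
  proof (rule ccontr)
    assume "f \<noteq> True"
    hence "omega6 = cnj omega6" using qS0[OF lat_om] c1 by simp
    thus False using om_cnj_ne by simp
  qed
  have RR: "Ref \<circ> Ref = id" by (simp add: fun_eq_iff Ref_app)
  have RRRR: "Ref \<circ> Rot \<circ> Ref \<circ> Rot = id"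
    using om_norm by (simp add: fun_eq_iff Ref_app Rot_app mult.assoc[symmetric] mult.commute)
  have "psi Ref \<circ> psi Ref = id" using psi_hom[OF Ref_Gam Ref_Gam] RR psi_id by simp
  hence "(psi Ref \<circ> psi Ref) 0 = 0" by simp
  hence eq1: "q + cnj q = 0" unfolding qS c1 fT by (simp add: gel_app)
  have "psi Ref \<circ> psi Rot \<circ> psi Ref \<circ> psi Rot = id"
    using psi_hom Ref_Gam Rot_Gam Gam_comp RRRR psi_id by metis
  hence "(psi Ref \<circ> psi Rot \<circ> psi Ref \<circ> psi Rot) 0 = 0" by simp
  hence eq2: "q + cnj (p + omega6 * (q + cnj p)) = 0"
    unfolding qS c1 fT pR bw eF by (simp add: gel_app)
  define v where "v = omega6 * p"
  have vL: "v \<in> Lam" unfolding v_def using lat_mult[OF lat_om pR(2)] .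
  have pv: "p = v - omega6 * v" unfolding v_def using om_sq
    unfolding power2_eq_square by algebra
  have "omega6 * q = omega6 * (v - cnj v)"
  proof -
    have cq: "cnj q = - q" using eq1 by (simp add: eq_neg_iff_add_eq_0 add.commute)
    have "q + cnj p + cnj omega6 * (cnj q + p) = 0" using eq2 by (simp add: algebra_simps)
    hence "q + cnj p + (1 - omega6) * (- q + p) = 0" using cq om_cnj by simp
    moreover have "cnj v = (1 - omega6) * cnj p" using om_cnj by (simp add: v_def)
    ultimately show ?thesis using om_sq unfolding v_def by algebra
  qed
  hence qv: "q = v - cnj v" using om_ne0 by simp
  define C where "C g = Tr v \<circ> g \<circ> Tr (- v)" for g
  have C_mult: "C (g \<circ> k) = C g \<circ> C k" for g k
    unfolding C_def by (simp add: fun_eq_iff Tr_app)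
  have C_Rot: "C Rot = psi Rot" unfolding C_def pR bw eF pv
    by (simp add: fun_eq_iff Tr_app gel_app Rot_app algebra_simps)
  have C_Ref: "C Ref = psi Ref" unfolding C_def qS c1 fT qv
    by (simp add: fun_eq_iff Tr_app gel_app Ref_app algebra_simps)
  have C_Tr: "C (Tr t) = Tr t" for t unfolding C_def by (simp add: fun_eq_iff Tr_app)
  have Pk: "\<forall>t\<in>Lam. psi (gel t (omega6^k) False) = C (gel t (omega6^k) False)" for k
  proof (induction k)
    case 0 thus ?case using psi_Tr C_Tr by (simp add: Tr_def)
  next
    case (Suc k)
    show ?case
    proof
      fix t assume t: "t \<in> Lam"
      have d: "gel t (omega6^Suc k) False = gel t (omega6^k) False \<circ> Rot"
        by (simp add: Rot_def gel_comp mult.commute)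
      have X: "gel t (omega6^k) False \<in> Gam" using GamI[OF t Uu_pow] .
      show "psi (gel t (omega6^Suc k) False) = C (gel t (omega6^Suc k) False)"
        unfolding d psi_hom[OF X Rot_Gam] C_mult using Suc t C_Rot by simp
    qed
  qed
  have psiC: "psi g = C g" if g: "g \<in> Gam" for g
  proof -
    obtain t a e where g': "g = gel t a e" "t \<in> Lam" "a \<in> Uu" using g by (elim GamE)
    obtain k where k: "a = omega6 ^ k" using unit_cases g'(3) by (auto simp: Uu_def)
    show ?thesis
    proof (cases e)
      case False thus ?thesis using Pk g' k by simp
    next
      case True
      have d: "g = gel t a False \<circ> Ref" using g' True by (simp add: Ref_def gel_comp)
      have X: "gel t a False \<in> Gam" using GamI[OF g'(2,3)] .
      show ?thesis unfolding d psi_hom[OF X Ref_Gam] C_mult using Pk g' k C_Ref by simp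
    qed
  qed
  define K where "K = h0 \<circ> Tr v"
  define K' where "K' = Tr (- v) \<circ> h0'"
  have KG: "K \<in> Gam" "K' \<in> Gam" unfolding K_def K'_def
    using Gam_comp h0G h0'(1) Tr_Gam vL lat_uminus by auto
  have "K' \<circ> K = id" unfolding K_def K'_def using h0a by (simp add: fun_eq_iff Tr_app)
  hence Kinv: "inv_into UNIV K = K'" using Gam_inv_into KG by blast
  have "phi g = K \<circ> g \<circ> inv_into UNIV K" if g: "g \<in> Gam" for g
  proof -
    have "phi g = h0 \<circ> psi g \<circ> h0'" unfolding psi_def using h0a by (simp add: fun_eq_iff)
    also have "\<dots> = K \<circ> g \<circ> K'" unfolding psiC[OF g] C_def K_def K'_def by (simp add: comp_assoc)
    finally show ?thesis using Kinv by simp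
  qed
  thus ?thesis using KG by blast
qed

end

abbreviation "iota K \<equiv> conj_by K Gam"

lemma Aut_carrier: "phi \<in> carrier (Aut_group Gam) \<longleftrightarrow>
   phi \<in> extensional Gam \<and> bij_betw phi Gam Gam \<and> (\<forall>g\<in>Gam. \<forall>h\<in>Gam. phi (g \<circ> h) = phi g \<circ> phi h)"
  unfolding Aut_group_def by (simp only: partial_object.select_convs mem_Collect_eq)

lemma Aut_inner: "phi \<in> carrier (Aut_group Gam) \<Longrightarrow> \<exists>K\<in>Gam. phi = iota K"
proof -
  assume p: "phi \<in> carrier (Aut_group Gam)"
  have p': "phi \<in> extensional Gam" "bij_betw phi Gam Gam" "\<forall>g\<in>Gam. \<forall>h\<in>Gam. phi (g \<circ> h) = phi g \<circ> phi h"
    using p[unfolded Aut_carrier] by auto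
  have au: "autom phi" using p'(2,3) by (intro autom.intro) auto
  obtain K where K: "K \<in> Gam" "\<forall>g\<in>Gam. phi g = K \<circ> g \<circ> inv_into UNIV K"
    using autom.inner[OF au] by (elim bexE)
  have "phi g = iota K g" for g
  proof (cases "g \<in> Gam")
    case True
    hence "phi g = K \<circ> g \<circ> inv_into UNIV K" using K(2) by blast
    thus ?thesis using True unfolding conj_by_def restrict_apply by simp
  next
    case False
    have "phi g = undefined" using p'(1) False by (rule extensional_arb)
    thus ?thesis using False unfolding conj_by_def restrict_apply by simp
  qed
  hence "phi = iota K" by (rule ext)
  thus ?thesis using K by blast
qed


lemma conj_Aut:
  assumes f: "bij f" and im: "(\<lambda>g. f \<circ> g \<circ> inv_into UNIV f) ` Gam = Gam"
  shows "conj_by f Gam \<in> carrier (Aut_group Gam)"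
proof -
  have fi: "inv_into UNIV f \<circ> f = id" using f bij_is_inj inv_o_cancel by blast
  have fi': "inv_into UNIV f (f x) = x" for x using fi by (metis comp_apply id_apply)
  have inj: "inj_on (\<lambda>g. f \<circ> g \<circ> inv_into UNIV f) Gam"
  proof (rule inj_onI)
    fix g h assume "f \<circ> g \<circ> inv_into UNIV f = f \<circ> h \<circ> inv_into UNIV f"
    hence "inv_into UNIV f \<circ> (f \<circ> g \<circ> inv_into UNIV f) \<circ> f = inv_into UNIV f \<circ> (f \<circ> h \<circ> inv_into UNIV f) \<circ> f"
      by simp
    thus "g = h" using fi' by (simp add: fun_eq_iff)
  qed
  have "bij_betw (\<lambda>g. f \<circ> g \<circ> inv_into UNIV f) Gam Gam"
    unfolding bij_betw_def using inj im by blast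
  hence "bij_betw (conj_by f Gam) Gam Gam"
    unfolding conj_by_def by (rule bij_betw_cong[THEN iffD1, rotated]) simp
  moreover have "conj_by f Gam (g \<circ> h) = conj_by f Gam g \<circ> conj_by f Gam h" if "g \<in> Gam" "h \<in> Gam" for g h
  proof -
    have "g \<circ> h \<in> Gam" using that Gam_comp by blast
    thus ?thesis using that fi' by (simp add: conj_by_def fun_eq_iff)
  qed
  ultimately show ?thesis unfolding Aut_carrier by (simp add: conj_by_def)
qed

lemma Gam_inv': "g \<in> Gam \<Longrightarrow> inv_into UNIV g \<in> Gam \<and> g \<circ> inv_into UNIV g = id \<and> inv_into UNIV g \<circ> g = id"
  using Gam_inv Gam_inv_into by metis

lemma iota_Aut: "K \<in> Gam \<Longrightarrow> iota K \<in> carrier (Aut_group Gam)"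
proof -
  assume K: "K \<in> Gam"
  note Ki = Gam_inv'[OF K]
  have "(\<lambda>g. K \<circ> g \<circ> inv_into UNIV K) ` Gam = Gam"
  proof
    show "(\<lambda>g. K \<circ> g \<circ> inv_into UNIV K) ` Gam \<subseteq> Gam" using K Ki Gam_comp by auto
    show "Gam \<subseteq> (\<lambda>g. K \<circ> g \<circ> inv_into UNIV K) ` Gam"
    proof
      fix g assume g: "g \<in> Gam"
      have pt: "K (inv_into UNIV K x) = x" for x using Ki by (metis comp_apply id_apply)
      have "g = K \<circ> (inv_into UNIV K \<circ> g \<circ> K) \<circ> inv_into UNIV K"
        by (simp add: fun_eq_iff pt)
      moreover have "inv_into UNIV K \<circ> g \<circ> K \<in> Gam" using Ki g K Gam_comp by blast
      ultimately show "g \<in> (\<lambda>g. K \<circ> g \<circ> inv_into UNIV K) ` Gam" by blast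
    qed
  qed
  thus ?thesis using conj_Aut Gam_bij K by blast
qed

lemma iota_mult: "K \<in> Gam \<Longrightarrow> L \<in> Gam \<Longrightarrow> iota K \<otimes>\<^bsub>Aut_group Gam\<^esub> iota L = iota (K \<circ> L)"
proof -
  assume K: "K \<in> Gam" and L: "L \<in> Gam"
  have inv: "inv_into UNIV (K \<circ> L) = inv_into UNIV L \<circ> inv_into UNIV K"
    using o_inv_distrib Gam_bij K L by blast
  have mem: "L \<circ> g \<circ> inv_into UNIV L \<in> Gam" if "g \<in> Gam" for g
    using that L Gam_inv'[OF L] Gam_comp by blast
  have "(\<lambda>g\<in>Gam. iota K (iota L g)) = iota (K \<circ> L)"
  proof
    fix g show "(\<lambda>g\<in>Gam. iota K (iota L g)) g = iota (K \<circ> L) g"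
    proof (cases "g \<in> Gam")
      case True
      hence "iota K (iota L g) = K \<circ> (L \<circ> g \<circ> inv_into UNIV L) \<circ> inv_into UNIV K"
        using mem by (simp add: conj_by_def)
      also have "\<dots> = (K \<circ> L) \<circ> g \<circ> inv_into UNIV (K \<circ> L)" unfolding inv by (simp add: comp_assoc)
      also have "\<dots> = iota (K \<circ> L) g" using True by (simp add: conj_by_def)
      finally show ?thesis using True by simp
    next
      case False thus ?thesis by (simp add: conj_by_def)
    qed
  qed
  thus ?thesis by (simp add: Aut_group_def)
qed


lemma norm_in_Gam:
  assumes fN: "f \<in> normalizer_aff Gam"
  shows "f \<in> Gam"
proof -
  obtain a L where L: "linear L" "bij L" and f: "f = (\<lambda>x. a + L x)"
    using fN unfolding normalizer_aff_def affine_maps_def by blast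
  have im: "(\<lambda>g. f \<circ> g \<circ> inv_into UNIV f) ` Gam = Gam" using fN unfolding normalizer_aff_def by blast
  have Li: "inv_into UNIV L (L x) = x" "L (inv_into UNIV L y) = y" for x y
    using L(2) by (simp_all add: bij_is_inj bij_is_surj surj_f_inv_f inv_f_f)
  have fb: "bij f"
    by (rule o_bij[of "\<lambda>y. inv_into UNIV L (y - a)"]) (simp_all add: fun_eq_iff f Li)
  have fi: "inv_into UNIV f (f x) = x" for x using fb by (simp add: bij_is_inj inv_f_f)
  have "iota f \<in> carrier (Aut_group Gam)" using conj_Aut[OF fb im] .
  then obtain K where K: "K \<in> Gam" "iota f = iota K" using Aut_inner by blast
  obtain K' where K': "K' \<in> Gam" "K \<circ> K' = id" "K' \<circ> K = id" using Gam_inv[OF K(1)] by blast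
  have KK: "K (K' x) = x" "K' (K x) = x" for x using K' by (metis comp_apply id_apply)+
  have Ki: "inv_into UNIV K = K'" using Gam_inv_into K K' by blast
  have conjeq: "f \<circ> g \<circ> inv_into UNIV f = K \<circ> g \<circ> K'" if "g \<in> Gam" for g
  proof -
    have "iota f g = iota K g" using K(2) by simp
    thus ?thesis using that Ki by (simp add: conj_by_def)
  qed
  define F where "F = K' \<circ> f"
  have Fc: "F (g z) = g (F z)" if g: "g \<in> Gam" for g z
  proof -
    have "(f \<circ> g \<circ> inv_into UNIV f) (f z) = (K \<circ> g \<circ> K') (f z)" using conjeq[OF g] by simp
    hence "f (g z) = K (g (K' (f z)))" using fi by simp
    hence "K' (f (g z)) = g (K' (f z))" using KK by simp
    thus ?thesis by (simp add: F_def)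
  qed
  obtain s b e where K's: "K' = gel s b e" "b \<in> Uu" using K'(1) by (elim GamE)
  define M where "M z = b * cj e (L z)" for z
  define F0 where "F0 = s + b * cj e a"
  have FM: "F z = F0 + M z" for z by (simp add: F_def K's f gel_app M_def F0_def algebra_simps)
  have M0: "M 0 = 0" using linear_0[OF L(1)] by (simp add: M_def)
  have Madd: "M (x + y) = M x + M y" for x y using linear_add[OF L(1)] by (simp add: M_def algebra_simps)
  have Msc: "M (r *\<^sub>R x) = r *\<^sub>R M x" for r x using linear_scale[OF L(1)]
    by (simp add: M_def cj_scaleR)
  have "F (Tr 1 0) = Tr 1 (F 0)" using Fc[OF Tr_Gam[OF lat_1]] .
  hence M1: "M 1 = 1" using M0 by (simp add: FM Tr_app)
  have "F (Tr omega6 0) = Tr omega6 (F 0)" using Fc[OF Tr_Gam[OF lat_om]] .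
  hence Mo: "M omega6 = omega6" using M0 by (simp add: FM Tr_app)
  have "F (Rot 0) = Rot (F 0)" using Fc[OF Rot_Gam] .
  hence "F0 = omega6 * F0" using M0 by (simp add: FM Rot_app)
  hence F00: "F0 = 0" using om_ne1 by (metis mult_cancel_right2)
  have oe: "omega6 = (1/2) *\<^sub>R 1 + (sqrt 3 / 2) *\<^sub>R \<i>"
    by (simp add: complex_eq_iff)
  have "M omega6 = M ((1/2) *\<^sub>R 1) + M ((sqrt 3 / 2) *\<^sub>R \<i>)" by (subst oe) (rule Madd)
  hence "omega6 = (1/2) *\<^sub>R 1 + (sqrt 3 / 2) *\<^sub>R M \<i>" unfolding Msc M1 Mo .
  hence "(sqrt 3 / 2) *\<^sub>R M \<i> = (sqrt 3 / 2) *\<^sub>R \<i>" using oe by (metis add_left_cancel)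
  hence Mi: "M \<i> = \<i>" using scaleR_cancel_left[of "sqrt 3 / 2" "M \<i>" "\<i>"] by simp
  have Mz: "M z = z" for z
  proof -
    have z: "z = Re z *\<^sub>R 1 + Im z *\<^sub>R \<i>" by (simp add: complex_eq_iff)
    have "M z = Re z *\<^sub>R M 1 + Im z *\<^sub>R M \<i>" by (subst z) (simp add: Madd Msc)
    also have "\<dots> = z" using M1 Mi z by simp
    finally show ?thesis .
  qed
  have "f z = K z" for z
  proof -
    have "F z = z" using FM F00 Mz by simp
    hence "K (F z) = K z" by simp
    thus ?thesis using KK by (simp add: F_def)
  qed
  hence "f = K" by (rule ext)
  thus ?thesis using K(1) by simp
qed

lemma orb_eq: "g \<in> Gam \<Longrightarrow> orb Gam (g x) = orb Gam x"
proof -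
  assume g: "g \<in> Gam"
  obtain g' where g': "g' \<in> Gam" "g' \<circ> g = id" using Gam_inv[OF g] by blast
  have "g' (g x) = x" using g' by (metis comp_apply id_apply)
  show ?thesis unfolding orb_def
  proof
    show "(\<lambda>h. h (g x)) ` Gam \<subseteq> (\<lambda>h. h x) ` Gam"
    proof
      fix y assume "y \<in> (\<lambda>h. h (g x)) ` Gam"
      then obtain h where h: "h \<in> Gam" "y = h (g x)" by blast
      hence "y = (h \<circ> g) x" "h \<circ> g \<in> Gam" using Gam_comp g by auto
      thus "y \<in> (\<lambda>h. h x) ` Gam" by blast
    qed
    show "(\<lambda>h. h x) ` Gam \<subseteq> (\<lambda>h. h (g x)) ` Gam"
    proof
      fix y assume "y \<in> (\<lambda>h. h x) ` Gam"
      then obtain h where h: "h \<in> Gam" "y = h x" by blast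
      hence "y = (h \<circ> g') (g x)" "h \<circ> g' \<in> Gam" using Gam_comp g' \<open>g' (g x) = x\<close> by auto
      thus "y \<in> (\<lambda>h. h (g x)) ` Gam" by blast
    qed
  qed
qed

lemma induced_Gam: "K \<in> Gam \<Longrightarrow> induced Gam K = idt Gam"
proof -
  assume K: "K \<in> Gam"
  have "induced Gam K S = idt Gam S" for S
  proof (cases "S \<in> orbit_space Gam")
    case True
    then obtain y where S: "S = orb Gam y" unfolding orbit_space_def by blast
    have "y \<in> S" unfolding S orb_def using id_Gam by (intro image_eqI[where x=id]) auto
    hence "(SOME x. x \<in> S) \<in> S" by (rule someI)
    then obtain h where h: "h \<in> Gam" "(SOME x. x \<in> S) = h y" unfolding S orb_def by blast
    have "orb Gam (K (SOME x. x \<in> S)) = orb Gam (K (h y))" using h(2) by simp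
    also have "\<dots> = orb Gam (h y)" using orb_eq K by blast
    also have "\<dots> = S" using orb_eq h(1) S by blast
    finally have "orb Gam (K (SOME x. x \<in> S)) = S" .
    thus ?thesis using True unfolding induced_def idt_def by simp
  next
    case False thus ?thesis unfolding induced_def idt_def by simp
  qed
  thus ?thesis by (rule ext)
qed

lemma id_norm: "id \<in> normalizer_aff Gam"
proof -
  have "id \<in> affine_maps" unfolding affine_maps_def
    using linear_id[where ?'a = complex] by (intro CollectI exI[of _ 0] exI[of _ id]) (auto simp: fun_eq_iff)
  moreover have "(\<lambda>g. id \<circ> g \<circ> inv_into UNIV id) ` Gam = Gam" by simp
  ultimately show ?thesis unfolding normalizer_aff_def by blast
qed

lemma Aff_eq: "Aff Gam = {idt Gam}"
proof -
  have "\<And>f. f \<in> normalizer_aff Gam \<Longrightarrow> induced Gam f = idt Gam" using norm_in_Gam induced_Gam by blast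
  hence "Aff Gam \<subseteq> {idt Gam}" unfolding Aff_def by blast
  moreover have "idt Gam \<in> Aff Gam" unfolding Aff_def using id_norm induced_Gam[OF id_Gam] by (metis image_eqI)
  ultimately show ?thesis by blast
qed

lemma Sym_eq: "Sym Gam = {idt Gam}"
proof -
  have "id \<in> {f \<in> normalizer_aff Gam. \<forall>x y. dist (f x) (f y) = dist x y}" using id_norm by simp
  hence "idt Gam \<in> Sym Gam" unfolding Sym_def using induced_Gam[OF id_Gam] by force
  moreover have "Sym Gam \<subseteq> Aff Gam" unfolding Sym_def Aff_def by blast
  ultimately show ?thesis using Aff_eq by blast
qed


lemma coset_Inn: "K \<in> Gam \<Longrightarrow> Inn Gam #>\<^bsub>Aut_group Gam\<^esub> iota K = Inn Gam"
proof -
  assume K: "K \<in> Gam"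
  obtain K' where K': "K' \<in> Gam" "K' \<circ> K = id" using Gam_inv[OF K] by blast
  show ?thesis unfolding r_coset_def Inn_def
  proof
    show "(\<Union>h\<in>iota ` Gam. {h \<otimes>\<^bsub>Aut_group Gam\<^esub> iota K}) \<subseteq> iota ` Gam"
      using iota_mult K Gam_comp by auto
    show "iota ` Gam \<subseteq> (\<Union>h\<in>iota ` Gam. {h \<otimes>\<^bsub>Aut_group Gam\<^esub> iota K})"
    proof
      fix x assume "x \<in> iota ` Gam"
      then obtain g where g: "g \<in> Gam" "x = iota g" by blast
      have "iota (g \<circ> K') \<otimes>\<^bsub>Aut_group Gam\<^esub> iota K = iota (g \<circ> K' \<circ> K)"
        using iota_mult Gam_comp g K K' by blast
      also have "\<dots> = x" using K' g by (simp add: comp_assoc)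
      finally show "x \<in> (\<Union>h\<in>iota ` Gam. {h \<otimes>\<^bsub>Aut_group Gam\<^esub> iota K})"
        using g K' Gam_comp by blast
    qed
  qed
qed

lemma Out_carrier: "carrier (Out_group Gam) = {Inn Gam}"
proof -
  have "carrier (Out_group Gam) = (\<Union>a\<in>carrier (Aut_group Gam). {Inn Gam #>\<^bsub>Aut_group Gam\<^esub> a})"
    unfolding Out_group_def FactGroup_def RCOSETS_def by simp
  also have "\<dots> = {Inn Gam}"
  proof
    show "(\<Union>a\<in>carrier (Aut_group Gam). {Inn Gam #>\<^bsub>Aut_group Gam\<^esub> a}) \<subseteq> {Inn Gam}"
      using Aut_inner coset_Inn by blast
    show "{Inn Gam} \<subseteq> (\<Union>a\<in>carrier (Aut_group Gam). {Inn Gam #>\<^bsub>Aut_group Gam\<^esub> a})"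
      using iota_Aut[OF id_Gam] coset_Inn[OF id_Gam] by blast
  qed
  finally show ?thesis .
qed

lemma Inn_mult: "Inn Gam <#>\<^bsub>Aut_group Gam\<^esub> Inn Gam = Inn Gam"
  unfolding set_mult_def Inn_def
proof
  show "(\<Union>h\<in>iota ` Gam. \<Union>k\<in>iota ` Gam. {h \<otimes>\<^bsub>Aut_group Gam\<^esub> k}) \<subseteq> iota ` Gam"
    using iota_mult Gam_comp by auto
  show "iota ` Gam \<subseteq> (\<Union>h\<in>iota ` Gam. \<Union>k\<in>iota ` Gam. {h \<otimes>\<^bsub>Aut_group Gam\<^esub> k})"
  proof
    fix x assume "x \<in> iota ` Gam"
    then obtain g where g: "g \<in> Gam" "x = iota g" by blast
    have "iota g \<otimes>\<^bsub>Aut_group Gam\<^esub> iota id = x" using iota_mult[OF g(1) id_Gam] g by simp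
    thus "x \<in> (\<Union>h\<in>iota ` Gam. \<Union>k\<in>iota ` Gam. {h \<otimes>\<^bsub>Aut_group Gam\<^esub> k})"
      using g id_Gam by blast
  qed
qed

lemma Omega_idt: "Omega Gam (idt Gam) = Inn Gam"
proof -
  define f0 where "f0 = (SOME f. f \<in> normalizer_aff Gam \<and> induced Gam f = idt Gam)"
  have "\<exists>f. f \<in> normalizer_aff Gam \<and> induced Gam f = idt Gam"
    using id_norm induced_Gam[OF id_Gam] by blast
  hence "f0 \<in> normalizer_aff Gam" unfolding f0_def by (rule someI_ex[THEN conjunct1])
  hence "f0 \<in> Gam" by (rule norm_in_Gam)
  thus ?thesis unfolding Omega_def f0_def[symmetric] by (rule coset_Inn)
qed

theorem lemma1:
  shows "Sym p6m = {idt p6m} \<and> Aff p6m = {idt p6m}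
         \<and> Omega p6m \<in> iso (Aff_group p6m) (Out_group p6m)"
  unfolding p6m_eq
proof (intro conjI)
  show "Sym Gam = {idt Gam}" by (rule Sym_eq)
  show "Aff Gam = {idt Gam}" by (rule Aff_eq)
  have cA: "carrier (Aff_group Gam) = {idt Gam}" using Aff_eq by (simp add: Aff_group_def)
  have mA: "idt Gam \<otimes>\<^bsub>Aff_group Gam\<^esub> idt Gam = idt Gam"
    by (simp add: Aff_group_def idt_def fun_eq_iff restrict_def)
  have mO: "Inn Gam \<otimes>\<^bsub>Out_group Gam\<^esub> Inn Gam = Inn Gam"
    using Inn_mult by (simp add: Out_group_def FactGroup_def)
  show "Omega Gam \<in> iso (Aff_group Gam) (Out_group Gam)"
    unfolding iso_def hom_def cA Out_carrier
    using Omega_idt mA mO by (auto simp: bij_betw_def)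
qed


end
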